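(* Let $M_n=(Q,\Sigma,\Delta,Q_\alpha,F)$ be a simple NFA. Then the DFA $M_d=\mathrm{SubsetConstruction}(M_n)$ is minimal, i.e. no DFA with fewer states recognizes the same language as $M_d$.
   Context: An NFA is a tuple $M=(Q,\Sigma,\Delta,Q_\alpha,F)$ where $Q$ is a finite set of states, $\Sigma$ a finite alphabet, $\Delta:Q\times\Sigma\to\mathcal{P}(Q)$ the transition function, $Q_\alpha\subseteq Q$ the set of start states and $F\subseteq Q$ the set of accepting states. $\Delta$ is extended to strings by $\hat\Delta(q,\varepsilon)=\{q\}$ and $\hat\Delta(q,\sigma s)=\bigcup_{p\in\Delta(q,\sigma)}\hat\Delta(p,s)$ for $\sigma\in\Sigma$, $s\in\Sigma^*$. The language of a state $q$ is $\mathcal{L}(q)=\{s\in\Sigma^*:\hat\Delta(q,s)\cap F\neq\emptyset\}$, and for $Q'\subseteq Q$, $\mathcal{L}(Q')=\bigcup_{q\in Q'}\mathcal{L}(q)$; $M$ recognizes $\mathcal{L}(Q_\alpha)$. A state $q$ is accessible if $q\in\hat\Delta(q_\alpha,s)$ for some $q_\alpha\in Q_\alpha$ and $s\in\Sigma^*$. An NFA is called simple if all its states are accessible and the languages $\mathcal{L}(q)$, $q\in Q$, are non-empty and pairwise disjoint. $\mathrm{SubsetConstruction}(M)$ denotes the DFA obtained by the subset construction with inaccessible states removed: its states are the subsets of $Q$ of the form $\hat\delta(Q_\alpha,s)$, $s\in\Sigma^*$, where $\delta(Q',\sigma)=\bigcup_{q\in Q'}\Delta(q,\sigma)$ (extended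 to strings in the usual way); its start state is $Q_\alpha$, its transition function is $\delta$, and its accepting states are those subsets $Q'$ with $Q'\cap F\neq\emptyset$. It recognizes the same language as $M$. *)

theory Defs
  imports Main
begin

text \<open>An NFA (Q, Sigma, Delta, Q_alpha, F) and a (complete) DFA (S, Sigma, delta, s0, F).\<close>

type_synonym ('q,'a) nfa = "'q set \<times> 'a set \<times> ('q \<Rightarrow> 'a \<Rightarrow> 'q set) \<times> 'q set \<times> 'q set"
type_synonym ('s,'a) dfa = "'s set \<times> 'a set \<times> ('s \<Rightarrow> 'a \<Rightarrow> 's) \<times> 's \<times> 's set"

definition is_nfa :: "('q,'a) nfa \<Rightarrow> bool" where
  "is_nfa M = (case M of (Q, \<Sigma>, \<Delta>, Qa, F) \<Rightarrow>
     finite Q \<and> finite \<Sigma> \<and> (\<forall>q\<in>Q. \<forall>a\<in>\<Sigma>. \<Delta> q a \<subseteq> Q) \<and> Qa \<subseteq> Q \<and> F \<subseteq> Q)"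

fun nfa_hat :: "('q \<Rightarrow> 'a \<Rightarrow> 'q set) \<Rightarrow> 'q \<Rightarrow> 'a list \<Rightarrow> 'q set" where
  "nfa_hat \<Delta> q [] = {q}"
| "nfa_hat \<Delta> q (a # s) = (\<Union>p\<in>\<Delta> q a. nfa_hat \<Delta> p s)"

definition state_lang :: "('q,'a) nfa \<Rightarrow> 'q \<Rightarrow> 'a list set" where
  "state_lang M q = (case M of (Q, \<Sigma>, \<Delta>, Qa, F) \<Rightarrow>
     {s \<in> lists \<Sigma>. nfa_hat \<Delta> q s \<inter> F \<noteq> {}})"

definition nfa_lang :: "('q,'a) nfa \<Rightarrow> 'a list set" where
  "nfa_lang M = (case M of (Q, \<Sigma>, \<Delta>, Qa, F) \<Rightarrow> (\<Union>q\<in>Qa. state_lang M q))"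

definition accessible :: "('q,'a) nfa \<Rightarrow> 'q \<Rightarrow> bool" where
  "accessible M q = (case M of (Q, \<Sigma>, \<Delta>, Qa, F) \<Rightarrow>
     (\<exists>qa\<in>Qa. \<exists>s\<in>lists \<Sigma>. q \<in> nfa_hat \<Delta> qa s))"

definition simple_nfa :: "('q,'a) nfa \<Rightarrow> bool" where
  "simple_nfa M = (case M of (Q, \<Sigma>, \<Delta>, Qa, F) \<Rightarrow>
     is_nfa M \<and> (\<forall>q\<in>Q. accessible M q) \<and> (\<forall>q\<in>Q. state_lang M q \<noteq> {})
     \<and> (\<forall>p\<in>Q. \<forall>q\<in>Q. p \<noteq> q \<longrightarrow> state_lang M p \<inter> state_lang M q = {}))"

definition dfa_states :: "('s,'a) dfa \<Rightarrow> 's set" where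
  "dfa_states M = fst M"

definition dfa_alphabet :: "('s,'a) dfa \<Rightarrow> 'a set" where
  "dfa_alphabet M = fst (snd M)"

definition is_dfa :: "('s,'a) dfa \<Rightarrow> bool" where
  "is_dfa M = (case M of (S, \<Sigma>, \<delta>, s0, F) \<Rightarrow>
     finite S \<and> finite \<Sigma> \<and> s0 \<in> S \<and> F \<subseteq> S \<and> (\<forall>q\<in>S. \<forall>a\<in>\<Sigma>. \<delta> q a \<in> S))"

definition dfa_lang :: "('s,'a) dfa \<Rightarrow> 'a list set" where
  "dfa_lang M = (case M of (S, \<Sigma>, \<delta>, s0, F) \<Rightarrow> {w \<in> lists \<Sigma>. foldl \<delta> s0 w \<in> F})"

definition subset_delta :: "('q \<Rightarrow> 'a \<Rightarrow> 'q set) \<Rightarrow> 'q set \<Rightarrow> 'a \<Rightarrow> 'q set" where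
  "subset_delta \<Delta> Q' a = (\<Union>q\<in>Q'. \<Delta> q a)"

text \<open>Subset construction with inaccessible subsets removed.\<close>
definition SubsetConstruction :: "('q,'a) nfa \<Rightarrow> ('q set,'a) dfa" where
  "SubsetConstruction M = (case M of (Q, \<Sigma>, \<Delta>, Qa, F) \<Rightarrow>
     (let S = {foldl (subset_delta \<Delta>) Qa s | s. s \<in> lists \<Sigma>}
      in (S, \<Sigma>, subset_delta \<Delta>, Qa, {Q' \<in> S. Q' \<inter> F \<noteq> {}})))"

end

theory Submission
  imports Defs
begin

lemma foldl_sd: "foldl (subset_delta \<Delta>) P w = (\<Union>q\<in>P. nfa_hat \<Delta> q w)"
  by (induction w arbitrary: P) (auto simp: subset_delta_def)

lemma nfa_hat_sub:
  assumes cl: "\<forall>q\<in>Q. \<forall>a\<in>\<Sigma>. \<Delta> q a \<subseteq> Q"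
  shows "q \<in> Q \<Longrightarrow> w \<in> lists \<Sigma> \<Longrightarrow> nfa_hat \<Delta> q w \<subseteq> Q"
proof (induction w arbitrary: q)
  case Nil then show ?case by simp
next
  case (Cons a w)
  have "p \<in> Q" if "p \<in> \<Delta> q a" for p using cl Cons.prems that by auto
  then have "\<forall>p\<in>\<Delta> q a. nfa_hat \<Delta> p w \<subseteq> Q" using Cons.IH Cons.prems(2) by simp
  then show ?case by auto
qed
lemma dfa_fold_in:
  assumes "\<forall>q\<in>S. \<forall>a\<in>\<Sigma>. \<delta> q a \<in> S"
  shows "s \<in> S \<Longrightarrow> w \<in> lists \<Sigma> \<Longrightarrow> foldl \<delta> s w \<in> S"
  using assms by (induction w arbitrary: s) auto

theorem mainTheorem1:
  fixes M :: "('q,'a) nfa"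
  assumes "simple_nfa M"
  shows "is_dfa (SubsetConstruction M) \<and>
    (\<forall>M' :: ('s,'a) dfa. is_dfa M' \<and> dfa_alphabet M' = dfa_alphabet (SubsetConstruction M)
        \<and> dfa_lang M' = dfa_lang (SubsetConstruction M)
        \<longrightarrow> card (dfa_states (SubsetConstruction M)) \<le> card (dfa_states M'))"
proof -
  obtain Q \<Sigma> \<Delta> Qa F where M: "M = (Q, \<Sigma>, \<Delta>, Qa, F)" by (cases M) auto
  have fQ: "finite Q" and fS: "finite \<Sigma>" and cl: "\<forall>q\<in>Q. \<forall>a\<in>\<Sigma>. \<Delta> q a \<subseteq> Q"
    and QaQ: "Qa \<subseteq> Q" and FQ: "F \<subseteq> Q"
    using assms by (auto simp: M simple_nfa_def is_nfa_def)
  have ne: "\<forall>q\<in>Q. state_lang M q \<noteq> {}"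
    and dj: "\<forall>p\<in>Q. \<forall>q\<in>Q. p \<noteq> q \<longrightarrow> state_lang M p \<inter> state_lang M q = {}"
    using assms by (auto simp: M simple_nfa_def)
  have sl: "state_lang M q = {s \<in> lists \<Sigma>. nfa_hat \<Delta> q s \<inter> F \<noteq> {}}" for q
    by (simp add: M state_lang_def)
  define Sd where "Sd = {foldl (subset_delta \<Delta>) Qa s | s. s \<in> lists \<Sigma>}"
  have SC: "SubsetConstruction M = (Sd, \<Sigma>, subset_delta \<Delta>, Qa, {Q' \<in> Sd. Q' \<inter> F \<noteq> {}})"
    by (simp add: M SubsetConstruction_def Sd_def)
  have sub: "P \<subseteq> Q" if "P \<in> Sd" for P
  proof -
    from that obtain s where s: "s \<in> lists \<Sigma>" "P = foldl (subset_delta \<Delta>) Qa s"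
      unfolding Sd_def by blast
    show ?thesis using s QaQ nfa_hat_sub[OF cl] by (auto simp: foldl_sd)
  qed
  have SdQ: "Sd \<subseteq> Pow Q" using sub by blast
  have finSd: "finite Sd" using SdQ fQ finite_subset by blast
  have QaSd: "Qa \<in> Sd" unfolding Sd_def by (rule CollectI, rule exI[of _ "[]"]) simp
  have clSd: "\<forall>P\<in>Sd. \<forall>a\<in>\<Sigma>. subset_delta \<Delta> P a \<in> Sd"
  proof (intro ballI)
    fix P a assume "P \<in> Sd" "a \<in> \<Sigma>"
    then obtain s where s: "s \<in> lists \<Sigma>" "P = foldl (subset_delta \<Delta>) Qa s"
      unfolding Sd_def by blast
    then show "subset_delta \<Delta> P a \<in> Sd" unfolding Sd_def using \<open>a \<in> \<Sigma>\<close>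
      by (intro CollectI exI[of _ "s @ [a]"]) auto
  qed
  have isd: "is_dfa (SubsetConstruction M)"
    unfolding SC is_dfa_def using finSd fS QaSd clSd by auto
  have sep: "P1 = P2" if P1: "P1 \<in> Sd" and P2: "P2 \<in> Sd"
    and eq: "\<forall>w\<in>lists \<Sigma>. (foldl (subset_delta \<Delta>) P1 w \<inter> F \<noteq> {}) = (foldl (subset_delta \<Delta>) P2 w \<inter> F \<noteq> {})"
    for P1 P2
  proof (rule ccontr)
    assume "P1 \<noteq> P2"
    have key: False if A: "A \<subseteq> Q" "B \<subseteq> Q" "q \<in> A" "q \<notin> B"
      "\<forall>w\<in>lists \<Sigma>. (foldl (subset_delta \<Delta>) A w \<inter> F \<noteq> {}) = (foldl (subset_delta \<Delta>) B w \<inter> F \<noteq> {})"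
      for A B q
    proof -
      have qQ: "q \<in> Q" using A by blast
      then obtain w where w: "w \<in> state_lang M q" using ne by blast
      hence wl: "w \<in> lists \<Sigma>" and wq: "nfa_hat \<Delta> q w \<inter> F \<noteq> {}" by (auto simp: sl)
      have "foldl (subset_delta \<Delta>) A w \<inter> F \<noteq> {}" using wq A(3) by (auto simp: foldl_sd)
      hence "foldl (subset_delta \<Delta>) B w \<inter> F \<noteq> {}" using A(5) wl by simp
      then obtain p where p: "p \<in> B" "nfa_hat \<Delta> p w \<inter> F \<noteq> {}" by (auto simp: foldl_sd)
      have "p \<noteq> q" using p A by blast
      moreover have "w \<in> state_lang M p" using p wl by (simp add: sl)
      moreover have "p \<in> Q" using p A by blast
      ultimately have "state_lang M p \<inter> state_lang M q = {}" using dj qQ by blast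
      then show False using w \<open>w \<in> state_lang M p\<close> by blast
    qed
    from \<open>P1 \<noteq> P2\<close> obtain q where "(q \<in> P1 \<and> q \<notin> P2) \<or> (q \<in> P2 \<and> q \<notin> P1)" by blast
    then show False
    proof
      assume "q \<in> P1 \<and> q \<notin> P2" then show False
        using key[of P1 P2 q] sub[OF P1] sub[OF P2] eq by auto
    next
      assume "q \<in> P2 \<and> q \<notin> P1" then show False
        using key[of P2 P1 q] sub[OF P1] sub[OF P2] eq by auto
    qed
  qed
  have langSC: "dfa_lang (SubsetConstruction M) =
      {w \<in> lists \<Sigma>. foldl (subset_delta \<Delta>) Qa w \<inter> F \<noteq> {}}"
  proof -
    have "foldl (subset_delta \<Delta>) Qa w \<in> Sd" if "w \<in> lists \<Sigma>" for w
      unfolding Sd_def using that by blast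
    then show ?thesis unfolding SC dfa_lang_def by auto
  qed
  show ?thesis
  proof (intro conjI isd allI impI)
    fix M' :: "('s,'a) dfa"
    assume h: "is_dfa M' \<and> dfa_alphabet M' = dfa_alphabet (SubsetConstruction M)
        \<and> dfa_lang M' = dfa_lang (SubsetConstruction M)"
    obtain S' \<Sigma>' \<delta>' s0 F' where M': "M' = (S', \<Sigma>', \<delta>', s0, F')" by (cases M') auto
    have S'fin: "finite S'" and s0: "s0 \<in> S'" and cl': "\<forall>q\<in>S'. \<forall>a\<in>\<Sigma>'. \<delta>' q a \<in> S'"
      using h by (auto simp: M' is_dfa_def)
    have \<Sigma>': "\<Sigma>' = \<Sigma>" using h by (simp add: M' SC dfa_alphabet_def)
    have L': "{w \<in> lists \<Sigma>. foldl \<delta>' s0 w \<in> F'} = {w \<in> lists \<Sigma>. foldl (subset_delta \<Delta>) Qa w \<inter> F \<noteq> {}}"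
      using h langSC by (simp add: M' dfa_lang_def \<Sigma>')
    define wd where "wd P = (SOME s. s \<in> lists \<Sigma> \<and> foldl (subset_delta \<Delta>) Qa s = P)" for P
    have wd: "wd P \<in> lists \<Sigma> \<and> foldl (subset_delta \<Delta>) Qa (wd P) = P" if "P \<in> Sd" for P
      unfolding wd_def by (rule someI_ex) (use that Sd_def in blast)
    define f where "f P = foldl \<delta>' s0 (wd P)" for P
    have fim: "f ` Sd \<subseteq> S'"
      using wd dfa_fold_in[OF cl'] s0 \<Sigma>' by (auto simp: f_def)
    have inj: "inj_on f Sd"
    proof (rule inj_onI)
      fix P1 P2 assume P1: "P1 \<in> Sd" and P2: "P2 \<in> Sd" and fe: "f P1 = f P2"
      show "P1 = P2"
      proof (rule sep[OF P1 P2], rule ballI)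
        fix w assume wl: "w \<in> lists \<Sigma>"
        have r: "(foldl (subset_delta \<Delta>) P w \<inter> F \<noteq> {}) = (foldl \<delta>' (f P) w \<in> F')"
          if "P \<in> Sd" for P
        proof -
          have "wd P @ w \<in> lists \<Sigma>" using wd[OF that] wl by simp
          then have "(foldl \<delta>' s0 (wd P @ w) \<in> F') = (foldl (subset_delta \<Delta>) Qa (wd P @ w) \<inter> F \<noteq> {})"
            using L' by blast
          then show ?thesis using wd[OF that] by (simp add: f_def)
        qed
        show "(foldl (subset_delta \<Delta>) P1 w \<inter> F \<noteq> {}) = (foldl (subset_delta \<Delta>) P2 w \<inter> F \<noteq> {})"
          using r[OF P1] r[OF P2] fe by simp
      qed
    qed
    have "card Sd \<le> card S'" using card_inj_on_le[OF inj fim S'fin] .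
    then show "card (dfa_states (SubsetConstruction M)) \<le> card (dfa_states M')"
      by (simp add: SC M' dfa_states_def)
  qed
qed

end
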